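(* Each of the following holds; each item asserts the existence of a probability space $(\Omega,\mathcal{F},P)$ and real random variables $X,X_1,X_2,\dots$ on it with the stated properties. (a) There exist such $X,X_n$ with $X_n\xrightarrow{S_3\text{-}d}X$ but not $X_n\xrightarrow{S_2\text{-}d}X$. (b) There exist such $X,X_n$ with $X_n\xrightarrow{S_2\text{-}d}X$ but not $X_n\xrightarrow{S_3\text{-}d}X$. (c) For every $\alpha>0$ there exist such $X,X_n$ with $X_n\xrightarrow{S_\alpha\text{-}a.s.}X$ but not $X_n\xrightarrow{S_3\text{-}d}X$. (d) There exist such $X,X_n$ such that $X_n$ converges completely to $X$ but not $X_n\xrightarrow{S_3\text{-}d}X$.
   Context: Let $X,X_1,X_2,\dots$ be real random variables on a probability space $(\Omega,\mathcal{F},P)$, and let $F_n(x)=P(X_n\le x)$ and $F(x)=P(X\le x)$. - Complete convergence: for every $\varepsilon>0$, $\sum_{n=1}^\infty P(|X_n-X|\ge\varepsilon)<\infty$. - $X_n\xrightarrow{S_\alpha\text{-}a.s.}X$ ($\alpha>0$): $\sum_{n=1}^\infty |X_n-X|^\alpha<\infty$ almost surely. - $X_n\xrightarrow{S_2\text{-}d}X$: for every continuity point $x$ of $F$, $\sum_{n=1}^\infty |F_n(x)-F(x)|<\infty$. - $X_n\xrightarrow{S_3\text{-}d}X$: for every real $t$, $\sum_{n=1}^\infty |E[e^{itX_n}]-E[e^{itX}]|<\infty$. *)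

theory Defs
  imports "HOL-Probability.Probability"
begin

text \<open>Random variables X, X_1, X_2, ... on a probability space M.
  The sequence X_1, X_2, ... is represented by Xs :: nat => _ (index shift is
  irrelevant for all summability notions below).\<close>

definition rv_setting :: "'a measure \<Rightarrow> ('a \<Rightarrow> real) \<Rightarrow> (nat \<Rightarrow> 'a \<Rightarrow> real) \<Rightarrow> bool" where
  "rv_setting M X Xs \<longleftrightarrow> prob_space M \<and> X \<in> borel_measurable M \<and> (\<forall>n. Xs n \<in> borel_measurable M)"

definition cdf_of :: "'a measure \<Rightarrow> ('a \<Rightarrow> real) \<Rightarrow> real \<Rightarrow> real" where
  "cdf_of M Y x = measure M {\<omega> \<in> space M. Y \<omega> \<le> x}"

definition complete_conv :: "'a measure \<Rightarrow> (nat \<Rightarrow> 'a \<Rightarrow> real) \<Rightarrow> ('a \<Rightarrow> real) \<Rightarrow> bool" where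
  "complete_conv M Xs X \<longleftrightarrow>
     (\<forall>\<epsilon>>0. summable (\<lambda>n. measure M {\<omega> \<in> space M. \<bar>Xs n \<omega> - X \<omega>\<bar> \<ge> \<epsilon>}))"

definition S_alpha_as :: "real \<Rightarrow> 'a measure \<Rightarrow> (nat \<Rightarrow> 'a \<Rightarrow> real) \<Rightarrow> ('a \<Rightarrow> real) \<Rightarrow> bool" where
  "S_alpha_as \<alpha> M Xs X \<longleftrightarrow> (AE \<omega> in M. summable (\<lambda>n. \<bar>Xs n \<omega> - X \<omega>\<bar> powr \<alpha>))"

definition S2_d :: "'a measure \<Rightarrow> (nat \<Rightarrow> 'a \<Rightarrow> real) \<Rightarrow> ('a \<Rightarrow> real) \<Rightarrow> bool" where
  "S2_d M Xs X \<longleftrightarrow>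
     (\<forall>x. isCont (cdf_of M X) x \<longrightarrow> summable (\<lambda>n. \<bar>cdf_of M (Xs n) x - cdf_of M X x\<bar>))"

definition S3_d :: "'a measure \<Rightarrow> (nat \<Rightarrow> 'a \<Rightarrow> real) \<Rightarrow> ('a \<Rightarrow> real) \<Rightarrow> bool" where
  "S3_d M Xs X \<longleftrightarrow>
     (\<forall>t::real. summable (\<lambda>n. cmod (char (distr M borel (Xs n)) t - char (distr M borel X) t)))"

end

theory Submission
  imports Defs
begin

definition U :: "real measure" where "U = uniform_measure lborel {0..1::real}"

lemma U_prob: "prob_space U"
  unfolding U_def by (rule prob_space_uniform_measure) auto

lemma space_U[simp]: "space U = UNIV" and sets_U[simp]: "sets U = sets borel"
  unfolding U_def by auto

lemma measure_U: "A \<in> sets borel \<Longrightarrow> measure U A = measure lborel (A \<inter> {0..1})"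
  unfolding U_def by (subst measure_uniform_measure) (auto simp: Int_commute)

lemma not_summable_inv_Suc: "\<not> summable (\<lambda>n. 1 / (real n + 1))"
proof
  assume "summable (\<lambda>n. 1 / (real n + 1))"
  then have "summable (\<lambda>n. inverse (real (Suc n)))" by (simp add: inverse_eq_divide add.commute)
  then have "summable (\<lambda>n. inverse (real n))" by (subst summable_Suc_iff[symmetric])
  then show False using not_summable_harmonic by blast
qed

lemma summable_inv_Suc_sq: "summable (\<lambda>n. 1 / (real n + 1)^2)"
proof -
  have "summable (\<lambda>n. inverse (real n ^ 2))" by (rule inverse_power_summable) simp
  then have "summable (\<lambda>n. inverse (real (Suc n) ^ 2))" by (subst summable_Suc_iff)
  then show ?thesis by (simp add: inverse_eq_divide add.commute)
qed

lemma summable_ev0: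
  fixes f :: "nat \<Rightarrow> real"
  assumes "eventually (\<lambda>n. f n = 0) sequentially" shows "summable f"
  using summable_cong[OF assms] by simp

lemma iexp_lower: "\<bar>x\<bar> \<le> 1 \<Longrightarrow> \<bar>x\<bar> / 2 \<le> cmod (iexp x - 1)"
proof -
  assume x: "\<bar>x\<bar> \<le> 1"
  have "cmod (iexp x - (\<Sum>k \<le> 1. (\<i> * x)^k / fact k)) \<le> \<bar>x\<bar>^2 / 2"
    using iexp_approx1[of x 1] by (simp add: numeral_2_eq_2)
  then have a: "cmod (iexp x - 1 - \<i> * x) \<le> x^2 / 2" by (simp add: diff_diff_eq)
  have "cmod (\<i> * x) \<le> cmod (iexp x - 1) + cmod (iexp x - 1 - \<i> * x)"
    using norm_triangle_ineq4[of "iexp x - 1" "iexp x - 1 - \<i> * x"] by simp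
  then have "\<bar>x\<bar> \<le> cmod (iexp x - 1) + x^2/2" using a by (simp add: norm_mult)
  moreover have "x^2 \<le> \<bar>x\<bar>" using x
    by (metis abs_ge_zero abs_mult_self_eq mult_left_le power2_eq_square)
  ultimately show ?thesis by linarith
qed

lemma iexp_upper: "cmod (iexp x - 1) \<le> \<bar>x\<bar>"
  using iexp_approx1[of x 0] by simp

lemma char_const: "char (distr U borel (\<lambda>_. c)) t = iexp (t * c)"
proof -
  interpret prob_space U by (rule U_prob)
  have "prob UNIV = 1" using prob_space by simp
  then show ?thesis unfolding char_def by (subst integral_distr) auto
qed

lemma cdf_const: "cdf_of U (\<lambda>_. c) x = (if c \<le> x then 1 else 0)"
proof -
  interpret prob_space U by (rule U_prob)
  show ?thesis unfolding cdf_of_def using prob_space by auto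
qed

lemma inv_Suc_tendsto: "(\<lambda>n. 1 / (real n + 1)) \<longlonglongrightarrow> 0"
  using LIMSEQ_inverse_real_of_nat by (simp add: inverse_eq_divide add.commute)

lemma ev_small: "e > 0 \<Longrightarrow> eventually (\<lambda>n. 1 / (real n + 1) < e) sequentially"
  using order_tendstoD(2)[OF inv_Suc_tendsto] by blast

lemma char_bound: "f \<in> borel_measurable borel \<Longrightarrow> cmod (char (distr U borel f) t) \<le> 1"
proof -
  interpret prob_space U by (rule U_prob)
  assume "f \<in> borel_measurable borel"
  then have "real_distribution (distr U borel f)"
    by (intro real_distribution_distr) (simp add: measurable_cong_sets[OF sets_U refl])
  then show ?thesis by (rule real_distribution.cmod_char_le_1)
qed

lemma U_meas: "f \<in> borel_measurable borel \<Longrightarrow> f \<in> borel_measurable U"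
  by (simp add: measurable_cong_sets[OF sets_U refl])

lemma partB: "\<exists>(M::real measure) X Xs. rv_setting M X Xs \<and> S2_d M Xs X \<and> \<not> S3_d M Xs X"
  and partD: "\<exists>(M::real measure) X Xs. rv_setting M X Xs \<and> complete_conv M Xs X \<and> \<not> S3_d M Xs X"
proof -
  define Xs :: "nat \<Rightarrow> real \<Rightarrow> real" where "Xs n = (\<lambda>_. - (1 / (real n + 1)))" for n
  define X :: "real \<Rightarrow> real" where "X = (\<lambda>_. 0)"
  have rv: "rv_setting U X Xs" unfolding rv_setting_def Xs_def X_def using U_prob by simp
  have S2: "S2_d U Xs X"
    unfolding S2_d_def
  proof (intro allI impI)
    fix x :: real
    show "summable (\<lambda>n. \<bar>cdf_of U (Xs n) x - cdf_of U X x\<bar>)"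
    proof (cases "x \<ge> 0")
      case True
      have "- (1 / (real n + 1)) \<le> x" for n
        using True by (smt (verit) divide_nonneg_nonneg of_nat_0_le_iff)
      then show ?thesis using True by (simp add: Xs_def X_def cdf_const)
    next
      case False
      have "eventually (\<lambda>n. 1 / (real n + 1) < -x) sequentially"
        using False by (intro ev_small) simp
      then have "eventually (\<lambda>n. \<bar>cdf_of U (Xs n) x - cdf_of U X x\<bar> = 0) sequentially"
        by eventually_elim (use False in \<open>auto simp: Xs_def X_def cdf_const\<close>)
      then show ?thesis by (rule summable_ev0)
    qed
  qed
  have nS3: "\<not> S3_d U Xs X"
  proof
    assume "S3_d U Xs X"
    then have "summable (\<lambda>n. cmod (char (distr U borel (Xs n)) 1 - char (distr U borel X) 1))"
      unfolding S3_d_def by blast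
    then have sm: "summable (\<lambda>n. cmod (iexp (- (1 / (real n + 1))) - 1))"
      by (simp add: Xs_def X_def char_const)
    have "norm (1 / (real n + 1) / 2) \<le> cmod (iexp (- (1 / (real n + 1))) - 1)" for n
      using iexp_lower[of "- (1 / (real n + 1))"] by simp
    then have "summable (\<lambda>n. 1 / (real n + 1) / 2)"
      by (intro summable_comparison_test[OF _ sm]) blast
    then have "summable (\<lambda>n. 2 * (1 / (real n + 1) / 2))" by (rule summable_mult)
    moreover have "\<And>n. 2 * (1 / (real n + 1) / 2) = 1 / (real n + 1)" by (simp add: field_simps)
    ultimately show False using not_summable_inv_Suc by simp
  qed
  have cc: "complete_conv U Xs X"
    unfolding complete_conv_def
  proof (intro allI impI)
    fix e :: real assume e: "e > 0"
    have "eventually (\<lambda>n. measure U {\<omega> \<in> space U. \<bar>Xs n \<omega> - X \<omega>\<bar> \<ge> e} = 0) sequentially"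
      using ev_small[OF e] by eventually_elim (auto simp: Xs_def X_def)
    then show "summable (\<lambda>n. measure U {\<omega> \<in> space U. \<bar>Xs n \<omega> - X \<omega>\<bar> \<ge> e})"
      by (rule summable_ev0)
  qed
  show "\<exists>(M::real measure) X Xs. rv_setting M X Xs \<and> S2_d M Xs X \<and> \<not> S3_d M Xs X"
    using rv S2 nS3 by blast
  show "\<exists>(M::real measure) X Xs. rv_setting M X Xs \<and> complete_conv M Xs X \<and> \<not> S3_d M Xs X"
    using rv cc nS3 by blast
qed

lemma measure_Icc01: "0 \<le> p \<Longrightarrow> p \<le> 1 \<Longrightarrow> measure U {..p} = p"
proof -
  assume p: "0 \<le> p" "p \<le> 1"
  have "{..p} \<inter> {0..1} = {0..p}" using p by auto
  then show ?thesis using p by (simp add: measure_U)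
qed

lemma partC: "\<alpha> > 0 \<Longrightarrow> \<exists>(M::real measure) X Xs. rv_setting M X Xs \<and> S_alpha_as \<alpha> M Xs X \<and> \<not> S3_d M Xs X"
proof -
  assume a: "\<alpha> > 0"
  interpret prob_space U by (rule U_prob)
  define Xs :: "nat \<Rightarrow> real \<Rightarrow> real" where "Xs n = (\<lambda>\<omega>. if \<omega> \<le> 1 / (real n + 1) then 1 else 0)" for n
  define X :: "real \<Rightarrow> real" where "X = (\<lambda>_. 0)"
  have rv: "rv_setting U X Xs" unfolding rv_setting_def Xs_def X_def using U_prob
    by (auto intro!: U_meas)
  have Sa: "S_alpha_as \<alpha> U Xs X"
    unfolding S_alpha_as_def U_def
  proof (rule AE_uniform_measureI)
    show "{0..1::real} \<in> sets lborel" by simp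
    show "AE \<omega> in lborel. \<omega> \<in> {0..1} \<longrightarrow> summable (\<lambda>n. \<bar>Xs n \<omega> - X \<omega>\<bar> powr \<alpha>)"
      using AE_lborel_singleton[of "0::real"]
    proof eventually_elim
      case (elim \<omega>)
      show ?case
      proof
        assume "\<omega> \<in> {0..1}"
        with elim have w: "\<omega> > 0" by auto
        have "eventually (\<lambda>n. \<bar>Xs n \<omega> - X \<omega>\<bar> powr \<alpha> = 0) sequentially"
          using ev_small[OF w] by eventually_elim (auto simp: Xs_def X_def)
        then show "summable (\<lambda>n. \<bar>Xs n \<omega> - X \<omega>\<bar> powr \<alpha>)" by (rule summable_ev0)
      qed
    qed
  qed
  have ch: "char (distr U borel (Xs n)) pi = complex_of_real (1 - 2 * (1 / (real n + 1)))" for n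
  proof -
    define p where "p = 1 / (real n + 1)"
    have p: "0 \<le> p" "p \<le> 1" unfolding p_def by auto
    have m: "Xs n \<in> borel_measurable U" unfolding Xs_def by (auto intro!: U_meas)
    have pt: "iexp (pi * Xs n \<omega>) = complex_of_real (1 - 2 * indicator {..p} \<omega>)" for \<omega>
      by (auto simp: Xs_def p_def indicator_def)
    have "char (distr U borel (Xs n)) pi = (CLINT \<omega>|U. iexp (pi * Xs n \<omega>))"
      unfolding char_def using m by (subst integral_distr) auto
    also have "\<dots> = complex_of_real (LINT \<omega>|U. (1 - 2 * indicator {..p} \<omega>))"
      by (simp only: pt integral_complex_of_real)
    also have "(LINT \<omega>|U. (1 - 2 * indicator {..p} \<omega>)) = 1 - 2 * p"
    proof -
      have "prob UNIV = 1" using prob_space by simp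
      moreover have "integrable U (\<lambda>\<omega>. 2 * indicator {..p} \<omega> :: real)"
        by (intro integrable_mult_right) (simp add: emeasure_eq_measure)
      ultimately show ?thesis using measure_Icc01[OF p]
        by (subst Bochner_Integration.integral_diff) auto
    qed
    finally show ?thesis by (simp only: p_def)
  qed
  have nS3: "\<not> S3_d U Xs X"
  proof
    assume "S3_d U Xs X"
    then have "summable (\<lambda>n. cmod (char (distr U borel (Xs n)) pi - char (distr U borel X) pi))"
      unfolding S3_d_def by blast
    moreover have cX: "char (distr U borel X) pi = 1" unfolding X_def by (simp only: char_const) simp
    have "\<And>n. char (distr U borel (Xs n)) pi - char (distr U borel X) pi = complex_of_real (- (2 * (1 / (real n + 1))))"
      unfolding ch cX by simp
    then have "\<And>n. cmod (char (distr U borel (Xs n)) pi - char (distr U borel X) pi) = 2 * (1 / (real n + 1))"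
      by (simp only: norm_of_real) simp
    ultimately have "summable (\<lambda>n. 2 * (1 / (real n + 1)))" by simp
    then have "summable (\<lambda>n. (1/2) * (2 * (1 / (real n + 1))))" by (rule summable_mult)
    then show False using not_summable_inv_Suc by simp
  qed
  show ?thesis using rv Sa nS3 by blast
qed

lemma cdf_sq_bound: "cdf_of U (\<lambda>\<omega>. \<omega>^2) x \<le> sqrt \<bar>x\<bar>"
proof -
  have ms: "{\<omega>::real. \<omega>^2 \<le> x} \<in> sets borel" by measurable
  have "cdf_of U (\<lambda>\<omega>. \<omega>^2) x = measure lborel ({\<omega>. \<omega>^2 \<le> x} \<inter> {0..1})"
    unfolding cdf_of_def using measure_U[OF ms] by simp
  also have "\<dots> \<le> measure lborel {0..sqrt \<bar>x\<bar>}"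
  proof (rule measure_mono_fmeasurable)
    show "{\<omega>. \<omega>^2 \<le> x} \<inter> {0..1} \<subseteq> {0..sqrt \<bar>x\<bar>}"
    proof
      fix \<omega> assume w: "\<omega> \<in> {\<omega>. \<omega>^2 \<le> x} \<inter> {0..1}"
      then have "\<omega>^2 \<le> \<bar>x\<bar>" by auto
      then have "\<omega> \<le> sqrt \<bar>x\<bar>" by (rule real_le_rsqrt)
      with w show "\<omega> \<in> {0..sqrt \<bar>x\<bar>}" by auto
    qed
    show "{\<omega>. \<omega>^2 \<le> x} \<inter> {0..1} \<in> sets lborel" using ms by simp
    show "{0..sqrt \<bar>x\<bar>} \<in> fmeasurable lborel" by (simp add: fmeasurable_def)
  qed
  also have "\<dots> = sqrt \<bar>x\<bar>" by simp
  finally show ?thesis .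
qed

lemma partA: "\<exists>(M::real measure) X Xs. rv_setting M X Xs \<and> S3_d M Xs X \<and> \<not> S2_d M Xs X"
proof -
  interpret prob_space U by (rule U_prob)
  define c :: "nat \<Rightarrow> real" where "c n = 1 / (real n + 1)^2" for n
  define Xs :: "nat \<Rightarrow> real \<Rightarrow> real" where "Xs n = (\<lambda>\<omega>. \<omega>^2 - c n)" for n
  define X :: "real \<Rightarrow> real" where "X = (\<lambda>\<omega>. \<omega>^2)"
  have mX: "X \<in> borel_measurable U" unfolding X_def by (auto intro!: U_meas)
  have mXs: "Xs n \<in> borel_measurable U" for n unfolding Xs_def by (auto intro!: U_meas)
  have rv: "rv_setting U X Xs" unfolding rv_setting_def using U_prob mX mXs by simp
  have S3: "S3_d U Xs X"
    unfolding S3_d_def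
  proof
    fix t :: real
    have eq: "char (distr U borel (Xs n)) t = iexp (- (t * c n)) * char (distr U borel X) t" for n
    proof -
      have "char (distr U borel (Xs n)) t = (CLINT \<omega>|U. iexp (t * Xs n \<omega>))"
        unfolding char_def using mXs by (subst integral_distr) auto
      also have "\<dots> = (CLINT \<omega>|U. iexp (- (t * c n)) * iexp (t * X \<omega>))"
        by (rule Bochner_Integration.integral_cong)
           (auto simp: Xs_def X_def exp_add[symmetric] algebra_simps)
      also have "\<dots> = iexp (- (t * c n)) * (CLINT \<omega>|U. iexp (t * X \<omega>))" by simp
      also have "(CLINT \<omega>|U. iexp (t * X \<omega>)) = char (distr U borel X) t"
        unfolding char_def using mX by (subst integral_distr) auto
      finally show ?thesis .
    qed
    have bnd: "cmod (char (distr U borel (Xs n)) t - char (distr U borel X) t) \<le> \<bar>t\<bar> * c n" for n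
    proof -
      have "char (distr U borel (Xs n)) t - char (distr U borel X) t
            = (iexp (- (t * c n)) - 1) * char (distr U borel X) t"
        by (simp add: eq algebra_simps)
      then have "cmod (char (distr U borel (Xs n)) t - char (distr U borel X) t)
            = cmod (iexp (- (t * c n)) - 1) * cmod (char (distr U borel X) t)"
        by (simp add: norm_mult)
      also have "\<dots> \<le> \<bar>- (t * c n)\<bar> * 1"
        by (intro mult_mono iexp_upper char_bound) (auto simp: X_def)
      also have "\<dots> = \<bar>t\<bar> * c n" by (simp add: c_def abs_mult)
      finally show ?thesis .
    qed
    have "summable (\<lambda>n. \<bar>t\<bar> * c n)"
      unfolding c_def by (intro summable_mult summable_inv_Suc_sq)
    then show "summable (\<lambda>n. cmod (char (distr U borel (Xs n)) t - char (distr U borel X) t))"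
      by (rule summable_comparison_test[rotated]) (use bnd in auto)
  qed
  have F0: "cdf_of U X 0 = 0"
    using cdf_sq_bound[of 0] unfolding X_def cdf_of_def by (simp add: measure_nonneg antisym)
  have cont: "isCont (cdf_of U X) 0"
  proof -
    have "isCont (\<lambda>x. sqrt \<bar>x\<bar>) 0" by (intro continuous_intros)
    then have g: "((\<lambda>x. sqrt \<bar>x\<bar>) \<longlongrightarrow> 0) (at 0)" by (simp add: isCont_def)
    have "((cdf_of U X) \<longlongrightarrow> 0) (at 0)"
    proof (rule Lim_null_comparison[OF _ g])
      show "\<forall>\<^sub>F x in at 0. norm (cdf_of U X x) \<le> sqrt \<bar>x\<bar>"
        using cdf_sq_bound unfolding X_def cdf_of_def by (simp add: measure_nonneg)
    qed
    then show ?thesis using F0 by (simp add: isCont_def)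
  qed
  have Fn: "cdf_of U (Xs n) 0 = 1 / (real n + 1)" for n
  proof -
    have "{\<omega>. \<omega>^2 - c n \<le> 0} \<inter> {0..1} = {0..1 / (real n + 1)}"
    proof -
      have cn: "c n = (1 / (real n + 1))^2" unfolding c_def by (simp add: power_divide)
      have eqv: "\<omega>^2 - c n \<le> 0 \<longleftrightarrow> \<bar>\<omega>\<bar> \<le> 1 / (real n + 1)" for \<omega>
        unfolding cn diff_le_0_iff_le by (rule power2_le_iff_abs_le) simp
      have le1: "1 / (real n + 1) \<le> 1" by simp
      show ?thesis
      proof (rule set_eqI)
        fix \<omega> :: real
        show "\<omega> \<in> {\<omega>. \<omega>^2 - c n \<le> 0} \<inter> {0..1} \<longleftrightarrow> \<omega> \<in> {0..1 / (real n + 1)}"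
          using eqv[of \<omega>] order_trans[OF _ le1, of \<omega>] by (cases "\<omega> \<ge> 0") auto
      qed
    qed
    moreover have ms: "{\<omega>::real. \<omega>^2 - c n \<le> 0} \<in> sets borel" by measurable
    ultimately show ?thesis unfolding cdf_of_def Xs_def using measure_U[OF ms] by simp
  qed
  have nS2: "\<not> S2_d U Xs X"
  proof
    assume "S2_d U Xs X"
    then have "summable (\<lambda>n. \<bar>cdf_of U (Xs n) 0 - cdf_of U X 0\<bar>)"
      unfolding S2_d_def using cont by blast
    then show False using not_summable_inv_Suc by (simp add: Fn F0)
  qed
  show ?thesis using rv S3 nS2 by blast
qed

theorem mainTheorem4:
  shows "(\<exists>(M::real measure) X Xs. rv_setting M X Xs \<and> S3_d M Xs X \<and> \<not> S2_d M Xs X)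
       \<and> (\<exists>(M::real measure) X Xs. rv_setting M X Xs \<and> S2_d M Xs X \<and> \<not> S3_d M Xs X)
       \<and> (\<forall>\<alpha>>0. \<exists>(M::real measure) X Xs. rv_setting M X Xs \<and> S_alpha_as \<alpha> M Xs X \<and> \<not> S3_d M Xs X)
       \<and> (\<exists>(M::real measure) X Xs. rv_setting M X Xs \<and> complete_conv M Xs X \<and> \<not> S3_d M Xs X)"
  using partA partB partC partD by blast

end
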